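(* Let $P>0$, $\sigma^2>0$, $\mathrm{SNR}=P/\sigma^2$, $C=\frac12\log(1+\mathrm{SNR})$, and let $0<R<C$. Put $\theta=\theta(R)$ and $\alpha^*=\alpha^*(\theta(R))$. For each $n$, let $\mathbf b$ be uniformly distributed on the sphere $\{\mathbf x\in\mathbb R^n:\|\mathbf x\|=\sqrt{nP}\}$, let $\mathbf z$ be independent of $\mathbf b$ with i.i.d. $N(0,\sigma^2)$ components, and set $$\mathbf z_{\mathrm{eff}}=\frac{1-\alpha^*}{\alpha^*}\,\mathbf b+\mathbf z .$$ Then $$e^{-nE_{\mathrm{sp}}(R;\mathrm{SNR})}\doteq \Pr\Big(\|\mathbf z_{\mathrm{eff}}\|\ge \frac{\sqrt{nP}}{\alpha^*}\sin\theta(R)\Big).$$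
   Context: All logarithms are natural; rates are in nats. For positive sequences, $f(n)\doteq g(n)$ means $\frac1n\log\frac{f(n)}{g(n)}\to0$; $f\,\dot\le\, g$ means $\limsup_n\frac1n\log\frac{f(n)}{g(n)}\le0$; $f\,\dot\ge\, g$ means $g\,\dot\le\, f$. For $R>0$, $\theta(R)\in(0,\pi/2]$ is defined by $\sin\theta(R)=e^{-R}$. For $\theta\in(0,\pi/2)$, $\alpha^*(\theta)=\Big[\tfrac12\big(1+\sqrt{1+\tfrac{4}{\mathrm{SNR}\cos^2\theta}}\big)\Big]^{-1}$. The sphere-packing exponent is $E_{\mathrm{sp}}(R;\mathrm{SNR})=E_G(\beta_G,\rho_G)$, where $E_G(\beta,\rho)=\frac12\big[(1-\beta)(1+\rho)+\mathrm{SNR}+\rho\log\beta+\log(\beta-\frac{\mathrm{SNR}}{1+\rho})-2\rho R\big]$, $\beta_G=e^{2R}$, and $\rho_G=\frac{\mathrm{SNR}}{2\beta_G}\Big(1+\sqrt{1+\frac{4\beta_G}{\mathrm{SNR}(\beta_G-1)}}\Big)-1$. *)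

theory Defs
  imports "HOL-Probability.Probability"
begin

(* Vectors in R^n are functions nat => real, extensional on {..<n}, i.e. the
   carrier of the product measure space PiM {..<n} (%_. lborel). *)

definition enorm :: "nat \<Rightarrow> (nat \<Rightarrow> real) \<Rightarrow> real" where
  "enorm n x = sqrt (\<Sum>i<n. (x i)\<^sup>2)"

definition lebesgue_n :: "nat \<Rightarrow> (nat \<Rightarrow> real) measure" where
  "lebesgue_n n = PiM {..<n} (\<lambda>_. lborel)"

(* uniform (normalized surface = cone) measure on the sphere of radius r in R^n:
   radial projection of the uniform distribution on the closed unit ball *)
definition sphere_uniform :: "nat \<Rightarrow> real \<Rightarrow> (nat \<Rightarrow> real) measure" where
  "sphere_uniform n r =
     distr (uniform_measure (lebesgue_n n) {x \<in> space (lebesgue_n n). enorm n x \<le> 1})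
           (lebesgue_n n)
           (\<lambda>x. restrict (\<lambda>i. r * x i / enorm n x) {..<n})"

definition gauss_vec :: "nat \<Rightarrow> real \<Rightarrow> (nat \<Rightarrow> real) measure" where
  "gauss_vec n \<sigma>2 = PiM {..<n} (\<lambda>_. density lborel (normal_density 0 (sqrt \<sigma>2)))"

definition exp_equiv :: "(nat \<Rightarrow> real) \<Rightarrow> (nat \<Rightarrow> real) \<Rightarrow> bool" where
  "exp_equiv f g \<longleftrightarrow> (\<forall>\<^sub>F n in sequentially. f n > 0 \<and> g n > 0) \<and>
     ((\<lambda>n. ln (f n / g n) / real n) \<longlonglongrightarrow> 0)"

definition theta :: "real \<Rightarrow> real" where
  "theta R = arcsin (exp (- R))"

definition alpha_star :: "real \<Rightarrow> real \<Rightarrow> real" where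
  "alpha_star snr \<theta> = inverse ((1 + sqrt (1 + 4 / (snr * (cos \<theta>)\<^sup>2))) / 2)"

definition E_G :: "real \<Rightarrow> real \<Rightarrow> real \<Rightarrow> real \<Rightarrow> real" where
  "E_G snr R \<beta> \<rho> = ((1 - \<beta>) * (1 + \<rho>) + snr + \<rho> * ln \<beta> + ln (\<beta> - snr / (1 + \<rho>)) - 2 * \<rho> * R) / 2"

definition beta_G :: "real \<Rightarrow> real" where
  "beta_G R = exp (2 * R)"

definition rho_G :: "real \<Rightarrow> real \<Rightarrow> real" where
  "rho_G snr R = snr / (2 * beta_G R) * (1 + sqrt (1 + 4 * beta_G R / (snr * (beta_G R - 1)))) - 1"

definition E_sp :: "real \<Rightarrow> real \<Rightarrow> real" where
  "E_sp R snr = E_G snr R (beta_G R) (rho_G snr R)"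

end

theory Submission
  imports Defs
begin
lemma nn_integral_normal_density: "q > 0 \<Longrightarrow> (\<integral>\<^sup>+x. ennreal (normal_density m q x) \<partial>lborel) = 1"
  by (subst nn_integral_eq_integral) (auto simp: normal_density_nonneg)

lemma mgf_point:
  fixes q t a m x :: real
  assumes q: "q > 0" and u: "1 - 2*t*q\<^sup>2 > 0"
  defines "u \<equiv> 1 - 2*t*q\<^sup>2"
  shows "exp (t*(a+x)\<^sup>2) * normal_density m q x =
         exp (t*(a+m)\<^sup>2/u) / sqrt u * normal_density ((a+m)/u - a) (q / sqrt u) x"
proof -
  have up: "u > 0" using u u_def by simp
  have q2: "(q / sqrt u)\<^sup>2 = q\<^sup>2/u" using up by (simp add: power_divide)
  have e: "t*(a+x)\<^sup>2 + (-(x-m)\<^sup>2/(2*q\<^sup>2)) = t*(a+m)\<^sup>2/u + (-(x-((a+m)/u - a))\<^sup>2/(2*(q/sqrt u)\<^sup>2))"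
  proof -
    have tq: "t = (1-u)/(2*q\<^sup>2)" using q unfolding u_def by simp
    have "x - ((a+m)/u - a) = ((x+a)*u - (a+m))/u" using up by (simp add: field_simps)
    then show ?thesis unfolding q2 tq using up q
      by (simp add: field_simps power2_eq_square)
  qed
  have c: "1 / sqrt (2*pi*q\<^sup>2) = 1 / sqrt u * (1 / sqrt (2*pi*(q/sqrt u)\<^sup>2))"
    unfolding q2 using up q by (simp add: real_sqrt_divide real_sqrt_mult field_simps)
  have "exp (t*(a+x)\<^sup>2) * normal_density m q x = 1 / sqrt (2*pi*q\<^sup>2) * exp (t*(a+x)\<^sup>2 + (-(x-m)\<^sup>2/(2*q\<^sup>2)))"
    unfolding normal_density_def exp_add by simp
  also have "\<dots> = 1 / sqrt u * (1 / sqrt (2*pi*(q/sqrt u)\<^sup>2)) * (exp (t*(a+m)\<^sup>2/u) * exp (-(x-((a+m)/u - a))\<^sup>2/(2*(q/sqrt u)\<^sup>2)))"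
    unfolding e c exp_add ..
  also have "\<dots> = exp (t*(a+m)\<^sup>2/u) / sqrt u * normal_density ((a+m)/u - a) (q / sqrt u) x"
    unfolding normal_density_def by simp
  finally show ?thesis .
qed

lemma mgf1:
  fixes q t a m :: real
  assumes q: "q > 0" and u: "1 - 2*t*q\<^sup>2 > 0"
  shows "(\<integral>\<^sup>+x. ennreal (exp (t*(a+x)\<^sup>2)) \<partial>density lborel (normal_density m q))
          = ennreal (exp (t*(a+m)\<^sup>2/(1 - 2*t*q\<^sup>2)) / sqrt (1 - 2*t*q\<^sup>2))"
proof -
  define u where "u = 1 - 2*t*q\<^sup>2"
  have up: "u > 0" using u u_def by simp
  have "(\<integral>\<^sup>+x. ennreal (exp (t*(a+x)\<^sup>2)) \<partial>density lborel (normal_density m q))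
     = (\<integral>\<^sup>+x. ennreal (normal_density m q x) * ennreal (exp (t*(a+x)\<^sup>2)) \<partial>lborel)"
    by (subst nn_integral_density) auto
  also have "\<dots> = (\<integral>\<^sup>+x. ennreal (exp (t*(a+m)\<^sup>2/u) / sqrt u) * ennreal (normal_density ((a+m)/u - a) (q / sqrt u) x) \<partial>lborel)"
  proof (rule nn_integral_cong)
    fix x
    have pt: "normal_density m q x * exp (t*(a+x)\<^sup>2) = exp (t*(a+m)\<^sup>2/u) / sqrt u * normal_density ((a+m)/u - a) (q / sqrt u) x"
      using mgf_point[OF q u, of a x m] unfolding u_def by (simp add: mult.commute)
    have "ennreal (normal_density m q x) * ennreal (exp (t*(a+x)\<^sup>2)) = ennreal (normal_density m q x * exp (t*(a+x)\<^sup>2))"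
      by (rule ennreal_mult[symmetric]) auto
    also have "\<dots> = ennreal (exp (t*(a+m)\<^sup>2/u) / sqrt u) * ennreal (normal_density ((a+m)/u - a) (q / sqrt u) x)"
      unfolding pt using up by (intro ennreal_mult) auto
    finally show "ennreal (normal_density m q x) * ennreal (exp (t*(a+x)\<^sup>2)) = ennreal (exp (t*(a+m)\<^sup>2/u) / sqrt u) * ennreal (normal_density ((a+m)/u - a) (q / sqrt u) x)" .
  qed
  also have "\<dots> = ennreal (exp (t*(a+m)\<^sup>2/u) / sqrt u)"
    using up q by (simp add: nn_integral_cmult nn_integral_normal_density)
  finally show ?thesis unfolding u_def .
qed

lemma mgf_vec:
  fixes \<sigma>2 t :: real and a :: "nat \<Rightarrow> real"
  assumes q: "\<sigma>2 > 0" and u: "1 - 2*t*\<sigma>2 > 0"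
  shows "(\<integral>\<^sup>+z. ennreal (exp (t * (\<Sum>i<n. (a i + z i)\<^sup>2))) \<partial>gauss_vec n \<sigma>2)
          = ennreal (exp (t*(\<Sum>i<n. (a i)\<^sup>2)/(1 - 2*t*\<sigma>2)) / sqrt (1 - 2*t*\<sigma>2) ^ n)"
proof -
  let ?M = "\<lambda>_::nat. density lborel (normal_density 0 (sqrt \<sigma>2))"
  interpret product_sigma_finite ?M
    unfolding product_sigma_finite_def
    using prob_space_normal_density[of "sqrt \<sigma>2" 0] prob_space_imp_sigma_finite q by auto
  have sq: "(sqrt \<sigma>2)\<^sup>2 = \<sigma>2" using q by simp
  have "(\<integral>\<^sup>+z. ennreal (exp (t * (\<Sum>i<n. (a i + z i)\<^sup>2))) \<partial>gauss_vec n \<sigma>2)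
      = (\<integral>\<^sup>+z. (\<Prod>i<n. ennreal (exp (t*(a i + z i)\<^sup>2))) \<partial>gauss_vec n \<sigma>2)"
    by (simp add: sum_distrib_left exp_sum prod_ennreal)
  also have "\<dots> = (\<Prod>i<n. \<integral>\<^sup>+x. ennreal (exp (t*(a i + x)\<^sup>2)) \<partial>?M i)"
    unfolding gauss_vec_def by (rule product_nn_integral_prod) auto
  also have "\<dots> = (\<Prod>i<n. ennreal (exp (t*(a i)\<^sup>2/(1 - 2*t*\<sigma>2)) / sqrt (1 - 2*t*\<sigma>2)))"
    using mgf1[where q="sqrt \<sigma>2" and t=t and m=0] q u sq by (intro prod.cong) auto
  also have "\<dots> = ennreal (\<Prod>i<n. exp (t*(a i)\<^sup>2/(1 - 2*t*\<sigma>2)) / sqrt (1 - 2*t*\<sigma>2))"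
    by (rule prod_ennreal) (use u in simp)
  also have "\<dots> = ennreal (exp (t*(\<Sum>i<n. (a i)\<^sup>2)/(1 - 2*t*\<sigma>2)) / sqrt (1 - 2*t*\<sigma>2) ^ n)"
    by (simp add: prod_dividef sum_divide_distrib sum_distrib_left exp_sum power_divide)
  finally show ?thesis .
qed

definition Mg :: "nat \<Rightarrow> real \<Rightarrow> real \<Rightarrow> real \<Rightarrow> real" where
  "Mg n \<sigma>2 A t = exp (t*A/(1 - 2*t*\<sigma>2)) / sqrt (1 - 2*t*\<sigma>2) ^ n"

lemma S_meas[measurable]: "(\<lambda>z. \<Sum>i<n. (a i + z i)\<^sup>2 :: real) \<in> borel_measurable (PiM {..<n} (\<lambda>_. lborel))"
  by measurable

lemma space_gauss_vec: "space (gauss_vec n \<sigma>2) = space (PiM {..<n} (\<lambda>_. lborel))"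
  unfolding gauss_vec_def by (simp add: space_PiM)

lemma sets_gauss_vec[measurable_cong]: "sets (gauss_vec n \<sigma>2) = sets (PiM {..<n} (\<lambda>_. lborel))"
  unfolding gauss_vec_def by (intro sets_PiM_cong) auto

lemma chernoff_upper:
  fixes \<sigma>2 t X :: real and a :: "nat \<Rightarrow> real"
  assumes q: "\<sigma>2 > 0" and u: "1 - 2*t*\<sigma>2 > 0" and t: "t \<ge> 0"
  shows "emeasure (gauss_vec n \<sigma>2) {z \<in> space (gauss_vec n \<sigma>2). X \<le> (\<Sum>i<n. (a i + z i)\<^sup>2)}
         \<le> ennreal (exp (-t*X) * Mg n \<sigma>2 (\<Sum>i<n. (a i)\<^sup>2) t)"
proof -
  let ?S = "\<lambda>z. \<Sum>i<n. (a i + z i)\<^sup>2"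
  have "emeasure (gauss_vec n \<sigma>2) {z \<in> space (gauss_vec n \<sigma>2). X \<le> ?S z}
      = (\<integral>\<^sup>+z. indicator {z \<in> space (gauss_vec n \<sigma>2). X \<le> ?S z} z \<partial>gauss_vec n \<sigma>2)"
    by (subst nn_integral_indicator) auto
  also have "\<dots> \<le> (\<integral>\<^sup>+z. ennreal (exp (-t*X)) * ennreal (exp (t * ?S z)) \<partial>gauss_vec n \<sigma>2)"
  proof (rule nn_integral_mono)
    fix z
    have "indicator {z \<in> space (gauss_vec n \<sigma>2). X \<le> ?S z} z \<le> ennreal (exp (-t*X) * exp (t * ?S z))"
    proof (cases "X \<le> ?S z")
      case True
      have "t*X \<le> t * ?S z" using True t by (rule mult_left_mono)
      then have "1 \<le> exp (-t*X) * exp (t * ?S z)"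
        by (simp add: exp_add[symmetric])
      then show ?thesis by (auto simp: indicator_def)
    qed (auto simp: indicator_def)
    then show "indicator {z \<in> space (gauss_vec n \<sigma>2). X \<le> ?S z} z \<le> ennreal (exp (-t*X)) * ennreal (exp (t * ?S z))"
      by (simp add: ennreal_mult)
  qed
  also have "\<dots> = ennreal (exp (-t*X)) * (\<integral>\<^sup>+z. ennreal (exp (t * ?S z)) \<partial>gauss_vec n \<sigma>2)"
    by (rule nn_integral_cmult) simp
  also have "\<dots> = ennreal (exp (-t*X) * Mg n \<sigma>2 (\<Sum>i<n. (a i)\<^sup>2) t)"
    unfolding mgf_vec[OF q u] Mg_def using u by (subst ennreal_mult[symmetric]) auto
  finally show ?thesis .
qed


lemma prob_space_gauss_vec: "\<sigma>2 > 0 \<Longrightarrow> prob_space (gauss_vec n \<sigma>2)"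
  unfolding gauss_vec_def by (intro prob_space_PiM prob_space_normal_density) simp

lemma ennreal3:
  fixes a b c d e :: real
  assumes "0\<le>a" "0\<le>b" "0\<le>c" "0\<le>d" "0\<le>e"
  shows "ennreal (a*b + c*indicator E z + d*e) = ennreal a * ennreal b + ennreal c * indicator E z + ennreal d * ennreal e"
proof -
  have "ennreal (a*b + c*indicator E z + d*e) = ennreal (a*b) + ennreal (c*indicator E z) + ennreal (d*e)"
    using assms by (simp add: ennreal_plus[symmetric] indicator_def del: ennreal_plus)
  also have "\<dots> = ennreal a * ennreal b + ennreal c * indicator E z + ennreal d * ennreal e"
    using assms by (simp add: ennreal_mult indicator_def)
  finally show ?thesis .
qed

lemma chernoff_lower:
  fixes \<sigma>2 t X Y h1 h2 :: real and a :: "nat \<Rightarrow> real"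
  assumes q: "\<sigma>2 > 0" and t: "t \<ge> 0" and h1: "h1 \<ge> 0" and h2: "h2 \<ge> 0"
    and u2: "1 - 2*(t+h2)*\<sigma>2 > 0"
  shows "Mg n \<sigma>2 (\<Sum>i<n. (a i)\<^sup>2) t \<le> exp (h1*X) * Mg n \<sigma>2 (\<Sum>i<n. (a i)\<^sup>2) (t-h1)
     + exp (t*Y) * measure (gauss_vec n \<sigma>2) {z \<in> space (gauss_vec n \<sigma>2). X \<le> (\<Sum>i<n. (a i + z i)\<^sup>2)}
     + exp (-h2*Y) * Mg n \<sigma>2 (\<Sum>i<n. (a i)\<^sup>2) (t+h2)"
proof -
  interpret G: prob_space "gauss_vec n \<sigma>2" using prob_space_gauss_vec[OF q] .
  let ?S = "\<lambda>z. \<Sum>i<n. (a i + z i)\<^sup>2"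
  let ?G = "gauss_vec n \<sigma>2"
  let ?E = "{z \<in> space ?G. X \<le> ?S z}"
  let ?A = "\<Sum>i<n. (a i)\<^sup>2"
  have u: "1 - 2*t*\<sigma>2 > 0" using u2 q h2 by (smt (verit) mult_right_mono)
  have u1: "1 - 2*(t-h1)*\<sigma>2 > 0" using u q h1 by (smt (verit) mult_right_mono)
  have E[measurable]: "?E \<in> sets ?G" by measurable
  have "ennreal (Mg n \<sigma>2 ?A t) = (\<integral>\<^sup>+z. ennreal (exp (t * ?S z)) \<partial>?G)"
    unfolding mgf_vec[OF q u] Mg_def ..
  also have "\<dots> \<le> (\<integral>\<^sup>+z. ennreal (exp (h1*X)) * ennreal (exp ((t-h1) * ?S z))
      + ennreal (exp (t*Y)) * indicator ?E z + ennreal (exp (-h2*Y)) * ennreal (exp ((t+h2) * ?S z)) \<partial>?G)"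
  proof (rule nn_integral_mono)
    fix z assume z: "z \<in> space ?G"
    consider "?S z < X" | "X \<le> ?S z" "?S z \<le> Y" | "Y < ?S z" by linarith
    then have "exp (t * ?S z) \<le> exp (h1*X) * exp ((t-h1) * ?S z) + exp (t*Y) * indicator ?E z + exp (-h2*Y) * exp ((t+h2) * ?S z)"
    proof cases
      case 1
      have "h1 * ?S z \<le> h1 * X" using 1 h1 by (intro mult_left_mono) auto
      then have "exp (t * ?S z) \<le> exp (h1*X) * exp ((t-h1) * ?S z)"
        unfolding exp_add[symmetric] by (simp add: algebra_simps)
      moreover have "0 \<le> exp (t*Y) * indicator ?E z + exp (-h2*Y) * exp ((t+h2) * ?S z)"
        by (simp add: indicator_def)
      ultimately show ?thesis by linarith
    next
      case 2
      have "exp (t * ?S z) \<le> exp (t*Y) * indicator ?E z"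
        using 2 t z by (simp add: indicator_def mult_left_mono)
      moreover have "0 \<le> exp (h1*X) * exp ((t-h1) * ?S z)" "0 \<le> exp (-h2*Y) * exp ((t+h2) * ?S z)"
        by simp_all
      ultimately show ?thesis by linarith
    next
      case 3
      have "h2 * Y \<le> h2 * ?S z" using 3 h2 by (intro mult_left_mono) auto
      then have "exp (t * ?S z) \<le> exp (-h2*Y) * exp ((t+h2) * ?S z)"
        unfolding exp_add[symmetric] by (simp add: algebra_simps)
      moreover have "0 \<le> exp (h1*X) * exp ((t-h1) * ?S z) + exp (t*Y) * indicator ?E z"
        by (simp add: indicator_def)
      ultimately show ?thesis by linarith
    qed
    then show "ennreal (exp (t * ?S z)) \<le> ennreal (exp (h1*X)) * ennreal (exp ((t-h1) * ?S z))
      + ennreal (exp (t*Y)) * indicator ?E z + ennreal (exp (-h2*Y)) * ennreal (exp ((t+h2) * ?S z))"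
      by (subst ennreal3[symmetric]) (auto simp del: ennreal_plus intro!: ennreal_leI)
  qed
  also have "\<dots> = (\<integral>\<^sup>+z. ennreal (exp (h1*X)) * ennreal (exp ((t-h1) * ?S z)) \<partial>?G)
      + (\<integral>\<^sup>+z. ennreal (exp (t*Y)) * indicator ?E z \<partial>?G) + (\<integral>\<^sup>+z. ennreal (exp (-h2*Y)) * ennreal (exp ((t+h2) * ?S z)) \<partial>?G)"
    by (simp add: nn_integral_add)
  also have "\<dots> = ennreal (exp (h1*X) * Mg n \<sigma>2 ?A (t-h1)) + ennreal (exp (t*Y) * measure ?G ?E)
      + ennreal (exp (-h2*Y) * Mg n \<sigma>2 ?A (t+h2))"
  proof -
    have m1: "Mg n \<sigma>2 ?A (t-h1) \<ge> 0" "Mg n \<sigma>2 ?A (t+h2) \<ge> 0" using u1 u2 by (simp_all add: Mg_def)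
    have i1: "(\<integral>\<^sup>+z. ennreal (exp (h1*X)) * ennreal (exp ((t-h1) * ?S z)) \<partial>?G) = ennreal (exp (h1*X) * Mg n \<sigma>2 ?A (t-h1))"
      apply (subst nn_integral_cmult, simp)
      apply (subst mgf_vec[OF q u1])
      apply (fold Mg_def)
      by (rule ennreal_mult[symmetric]) (use m1 in auto)
    have i3: "(\<integral>\<^sup>+z. ennreal (exp (-h2*Y)) * ennreal (exp ((t+h2) * ?S z)) \<partial>?G) = ennreal (exp (-h2*Y) * Mg n \<sigma>2 ?A (t+h2))"
      apply (subst nn_integral_cmult, simp)
      apply (subst mgf_vec[OF q u2])
      apply (fold Mg_def)
      by (rule ennreal_mult[symmetric]) (use m1 in auto)
    have i2: "(\<integral>\<^sup>+z. ennreal (exp (t*Y)) * indicator ?E z \<partial>?G) = ennreal (exp (t*Y) * measure ?G ?E)"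
      apply (subst nn_integral_cmult_indicator, simp)
      by (simp add: G.emeasure_eq_measure ennreal_mult)
    show ?thesis unfolding i1 i2 i3 ..
  qed
  also have "\<dots> = ennreal (exp (h1*X) * Mg n \<sigma>2 ?A (t-h1) + exp (t*Y) * measure ?G ?E + exp (-h2*Y) * Mg n \<sigma>2 ?A (t+h2))"
    using u1 u2 by (simp add: Mg_def ennreal_plus)
  finally show ?thesis
    by (subst (asm) ennreal_le_iff) (use u1 u2 in \<open>auto simp: Mg_def\<close>)
qed

lemma space_lebesgue_n: "space (lebesgue_n n) = PiE {..<n} (\<lambda>_. UNIV)"
  unfolding lebesgue_n_def by (simp add: space_PiM)

lemma enorm_meas[measurable]: "enorm n \<in> borel_measurable (lebesgue_n n)"
  unfolding enorm_def[abs_def] lebesgue_n_def by measurable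

lemma interp_L: "product_sigma_finite (\<lambda>_::nat. lborel)"
  unfolding product_sigma_finite_def by (simp add: lborel.sigma_finite_measure_axioms)

lemma sq_le_enorm: "i < n \<Longrightarrow> (x i)\<^sup>2 \<le> (enorm n x)\<^sup>2"
  unfolding enorm_def by (subst real_sqrt_pow2) (auto intro!: member_le_sum sum_nonneg)

lemma ball_sets: "{x \<in> space (lebesgue_n n). enorm n x \<le> 1} \<in> sets (lebesgue_n n)"
  by measurable

lemma ball_finite: "emeasure (lebesgue_n n) {x \<in> space (lebesgue_n n). enorm n x \<le> 1} \<noteq> \<infinity>"
proof -
  interpret product_sigma_finite "\<lambda>_::nat. lborel" by (rule interp_L)
  have "{x \<in> space (lebesgue_n n). enorm n x \<le> 1} \<subseteq> PiE {..<n} (\<lambda>_. {-1..1})"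
  proof
    fix x assume x: "x \<in> {x \<in> space (lebesgue_n n). enorm n x \<le> 1}"
    have "\<bar>x i\<bar> \<le> 1" if "i < n" for i
    proof -
      have "0 \<le> enorm n x" unfolding enorm_def by (simp add: sum_nonneg)
      then have "(enorm n x)\<^sup>2 \<le> 1" using x by (simp add: power_le_one)
      then have "(x i)\<^sup>2 \<le> 1\<^sup>2" using sq_le_enorm[OF that, of x] by simp
      then show ?thesis using abs_le_square_iff[of "x i" 1] by (simp del: abs_le_square_iff)
    qed
    then show "x \<in> PiE {..<n} (\<lambda>_. {-1..1})" using x by (auto simp: space_lebesgue_n PiE_def Pi_def abs_le_iff)
  qed
  then have "emeasure (lebesgue_n n) {x \<in> space (lebesgue_n n). enorm n x \<le> 1} \<le> emeasure (lebesgue_n n) (PiE {..<n} (\<lambda>_. {-1..1}))"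
    by (intro emeasure_mono) (auto simp: lebesgue_n_def)
  also have "\<dots> = (\<Prod>i<n. emeasure lborel {-1..1::real})"
    unfolding lebesgue_n_def by (rule emeasure_PiM) auto
  also have "\<dots> < \<infinity>" by (simp add: less_top[symmetric] power_eq_top_ennreal)
  finally show ?thesis by simp
qed

lemma ball_pos: assumes "n \<ge> 1" shows "emeasure (lebesgue_n n) {x \<in> space (lebesgue_n n). enorm n x \<le> 1} \<noteq> 0"
proof -
  interpret product_sigma_finite "\<lambda>_::nat. lborel" by (rule interp_L)
  define e where "e = 1 / sqrt n"
  have e: "e > 0" "e\<^sup>2 = 1 / n" using assms by (auto simp: e_def power_divide)
  have "PiE {..<n} (\<lambda>_. {-e..e}) \<subseteq> {x \<in> space (lebesgue_n n). enorm n x \<le> 1}"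
  proof
    fix x assume x: "x \<in> PiE {..<n} (\<lambda>_. {-e..e})"
    have "(\<Sum>i<n. (x i)\<^sup>2) \<le> (\<Sum>i<n. e\<^sup>2)"
    proof (rule sum_mono)
      fix i assume "i \<in> {..<n}"
      then have "\<bar>x i\<bar> \<le> e" using x by (auto simp: PiE_def Pi_def abs_le_iff)
      then show "(x i)\<^sup>2 \<le> e\<^sup>2" by (metis abs_ge_zero power2_abs power_mono)
    qed
    also have "\<dots> = 1" using e assms by simp
    finally show "x \<in> {x \<in> space (lebesgue_n n). enorm n x \<le> 1}"
      using x by (auto simp: space_lebesgue_n enorm_def PiE_def)
  qed
  then have le: "emeasure (lebesgue_n n) (PiE {..<n} (\<lambda>_. {-e..e})) \<le> emeasure (lebesgue_n n) {x \<in> space (lebesgue_n n). enorm n x \<le> 1}"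
    by (intro emeasure_mono ball_sets)
  have "emeasure (lebesgue_n n) (PiE {..<n} (\<lambda>_. {-e..e})) = (\<Prod>i<n. emeasure lborel {-e..e})"
    unfolding lebesgue_n_def by (rule emeasure_PiM) auto
  also have "\<dots> = (\<Prod>i<n. ennreal (2*e))" using e by simp
  also have "\<dots> = ennreal ((2*e)^n)" using e by (simp add: ennreal_power)
  finally have eq: "emeasure (lebesgue_n n) (PiE {..<n} (\<lambda>_. {-e..e})) = ennreal ((2*e)^n)" .
  have "0 < ennreal ((2*e)^n)" using e by simp
  then have "0 < emeasure (lebesgue_n n) {x \<in> space (lebesgue_n n). enorm n x \<le> 1}"
    using le unfolding eq by (rule order.strict_trans2)
  then show ?thesis by simp
qed

lemma null_zero: assumes "n \<ge> 1" shows "AE x in lebesgue_n n. enorm n x \<noteq> 0"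
proof -
  interpret product_sigma_finite "\<lambda>_::nat. lborel" by (rule interp_L)
  have "emeasure (lebesgue_n n) (PiE {..<n} (\<lambda>_. {0})) = (\<Prod>i<n. emeasure lborel {0::real})"
    unfolding lebesgue_n_def by (rule emeasure_PiM) auto
  also have "\<dots> = 0" using assms by (simp add: prod_zero_iff)
  moreover have "PiE {..<n} (\<lambda>_. {0::real}) \<in> sets (lebesgue_n n)"
    unfolding lebesgue_n_def by (rule sets_PiM_I_finite) auto
  ultimately have N: "PiE {..<n} (\<lambda>_. {0::real}) \<in> null_sets (lebesgue_n n)"
    by (simp add: null_sets_def)
  show ?thesis
  proof (rule AE_I'[OF N])
    show "{x \<in> space (lebesgue_n n). \<not> enorm n x \<noteq> 0} \<subseteq> PiE {..<n} (\<lambda>_. {0})"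
    proof
      fix x assume "x \<in> {x \<in> space (lebesgue_n n). \<not> enorm n x \<noteq> 0}"
      then have x: "x \<in> space (lebesgue_n n)" "enorm n x = 0" by auto
      have "x i = 0" if "i < n" for i using sq_le_enorm[OF that, of x] x by simp
      then show "x \<in> PiE {..<n} (\<lambda>_. {0})" using x(1) unfolding space_lebesgue_n PiE_iff by auto
    qed
  qed
qed


lemma sphere_map_meas: "(\<lambda>x. restrict (\<lambda>i. r * x i / enorm n x) {..<n}) \<in> measurable (lebesgue_n n) (lebesgue_n n)"
proof -
  have "(\<lambda>x. \<lambda>i\<in>{..<n}. r * x i / enorm n x) \<in> measurable (lebesgue_n n) (PiM {..<n} (\<lambda>_. lborel))"
  proof (rule measurable_restrict)
    fix i assume "i \<in> {..<n}"
    then show "(\<lambda>x. r * x i / enorm n x) \<in> measurable (lebesgue_n n) lborel"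
      using enorm_meas[of n] unfolding lebesgue_n_def by measurable
  qed
  then show ?thesis by (simp add: lebesgue_n_def)
qed

lemma sets_sphere[measurable_cong]: "sets (sphere_uniform n r) = sets (lebesgue_n n)"
  unfolding sphere_uniform_def by simp

lemma space_sphere: "space (sphere_uniform n r) = space (lebesgue_n n)"
  unfolding sphere_uniform_def by simp

lemma prob_space_sphere: assumes "n \<ge> 1" shows "prob_space (sphere_uniform n r)"
proof -
  interpret U: prob_space "uniform_measure (lebesgue_n n) {x \<in> space (lebesgue_n n). enorm n x \<le> 1}"
    by (rule prob_space_uniform_measure) (use ball_pos[OF assms] ball_finite in auto)
  show ?thesis unfolding sphere_uniform_def
    by (rule U.prob_space_distr) (subst measurable_cong_sets[OF sets_uniform_measure refl], rule sphere_map_meas)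
qed

lemma AE_sphere: assumes n: "n \<ge> 1" and r: "r \<ge> 0"
  shows "AE b in sphere_uniform n r. (\<Sum>i<n. (b i)\<^sup>2) = r\<^sup>2"
proof -
  let ?f = "\<lambda>x. restrict (\<lambda>i. r * x i / enorm n x) {..<n}"
  have S1: "{b \<in> space (lebesgue_n n). (\<Sum>i<n. (b i)\<^sup>2) = r\<^sup>2} \<in> sets (lebesgue_n n)"
    unfolding lebesgue_n_def by measurable
  have S2: "AE x in uniform_measure (lebesgue_n n) {x \<in> space (lebesgue_n n). enorm n x \<le> 1}.
      (\<Sum>i<n. (?f x i)\<^sup>2) = r\<^sup>2"
  proof (rule AE_uniform_measureI[OF ball_sets])
    show "AE x in lebesgue_n n. x \<in> {x \<in> space (lebesgue_n n). enorm n x \<le> 1} \<longrightarrow> (\<Sum>i<n. (?f x i)\<^sup>2) = r\<^sup>2"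
      using null_zero[OF n]
    proof eventually_elim
      case (elim x)
      have e2: "(enorm n x)\<^sup>2 = (\<Sum>i<n. (x i)\<^sup>2)" unfolding enorm_def
        by (subst real_sqrt_pow2) (auto intro!: sum_nonneg)
      have "(\<Sum>i<n. (?f x i)\<^sup>2) = (\<Sum>i<n. r\<^sup>2 * (x i)\<^sup>2 / (enorm n x)\<^sup>2)"
        by (auto intro!: sum.cong simp: power_divide power_mult_distrib)
      also have "\<dots> = r\<^sup>2 * (\<Sum>i<n. (x i)\<^sup>2) / (enorm n x)\<^sup>2"
        by (simp add: sum_divide_distrib[symmetric] sum_distrib_left)
      also have "\<dots> = r\<^sup>2"
      proof -
        have "(\<Sum>i<n. (x i)\<^sup>2) \<noteq> 0" using elim e2 by (metis power_eq_0_iff zero_neq_numeral)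
        then show ?thesis using e2 by simp
      qed
      finally show ?case by simp
    qed
  qed
  have meas: "?f \<in> measurable (uniform_measure (lebesgue_n n) {x \<in> space (lebesgue_n n). enorm n x \<le> 1}) (lebesgue_n n)"
    by (subst measurable_cong_sets[OF sets_uniform_measure refl]) (rule sphere_map_meas)
  show ?thesis unfolding sphere_uniform_def
    by (rule AE_distr_iff[OF meas S1, THEN iffD2, OF S2])
qed

lemma pair_bound:
  assumes M: "prob_space M" and N: "prob_space N" and A: "A \<in> sets (M \<Otimes>\<^sub>M N)"
    and lo: "0 \<le> lo" and hi: "0 \<le> hi"
    and ae: "AE x in M. lo \<le> measure N (Pair x -` A) \<and> measure N (Pair x -` A) \<le> hi"
  shows "lo \<le> measure (M \<Otimes>\<^sub>M N) A \<and> measure (M \<Otimes>\<^sub>M N) A \<le> hi"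
proof -
  interpret M: prob_space M by (rule M)
  interpret N: prob_space N by (rule N)
  interpret MN: pair_prob_space M N ..
  have eq: "emeasure (M \<Otimes>\<^sub>M N) A = (\<integral>\<^sup>+x. ennreal (measure N (Pair x -` A)) \<partial>M)"
    by (subst N.emeasure_pair_measure_alt[OF A]) (simp add: N.emeasure_eq_measure)
  have "(\<integral>\<^sup>+x. ennreal lo \<partial>M) \<le> (\<integral>\<^sup>+x. ennreal (measure N (Pair x -` A)) \<partial>M)"
    by (intro nn_integral_mono_AE eventually_mono[OF ae] ennreal_leI) auto
  then have l: "ennreal lo \<le> ennreal (measure (M \<Otimes>\<^sub>M N) A)"
    using eq by (simp add: MN.emeasure_eq_measure M.emeasure_space_1)
  have "(\<integral>\<^sup>+x. ennreal (measure N (Pair x -` A)) \<partial>M) \<le> (\<integral>\<^sup>+x. ennreal hi \<partial>M)"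
    by (intro nn_integral_mono_AE eventually_mono[OF ae] ennreal_leI) auto
  then have h: "ennreal (measure (M \<Otimes>\<^sub>M N) A) \<le> ennreal hi"
    using eq by (simp add: MN.emeasure_eq_measure M.emeasure_space_1)
  have "lo \<le> measure (M \<Otimes>\<^sub>M N) A" using l ennreal_le_iff[OF measure_nonneg] by blast
  moreover have "measure (M \<Otimes>\<^sub>M N) A \<le> hi" using h ennreal_le_iff[OF hi] by blast
  ultimately show ?thesis ..
qed

definition Aset :: "nat \<Rightarrow> real \<Rightarrow> real \<Rightarrow> real \<Rightarrow> real \<Rightarrow> ((nat \<Rightarrow> real) \<times> (nat \<Rightarrow> real)) set" where
  "Aset n P \<sigma>2 c k = {(b, z) \<in> space (sphere_uniform n (sqrt (real n * P)) \<Otimes>\<^sub>M gauss_vec n \<sigma>2).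
             enorm n (\<lambda>i. c * b i + z i) \<ge> k}"

lemma Aset_sets: "Aset n P \<sigma>2 c k \<in> sets (sphere_uniform n (sqrt (real n * P)) \<Otimes>\<^sub>M gauss_vec n \<sigma>2)"
proof -
  have f[measurable]: "(\<lambda>p. enorm n (\<lambda>i. c * fst p i + snd p i)) \<in> borel_measurable (lebesgue_n n \<Otimes>\<^sub>M lebesgue_n n)"
    unfolding enorm_def lebesgue_n_def by measurable
  have se: "sets (sphere_uniform n (sqrt (real n * P)) \<Otimes>\<^sub>M gauss_vec n \<sigma>2) = sets (lebesgue_n n \<Otimes>\<^sub>M lebesgue_n n)"
    by (intro sets_pair_measure_cong sets_sphere) (simp add: sets_gauss_vec lebesgue_n_def)
  have "Aset n P \<sigma>2 c k = {p \<in> space (lebesgue_n n \<Otimes>\<^sub>M lebesgue_n n). k \<le> enorm n (\<lambda>i. c * fst p i + snd p i)}"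
    unfolding Aset_def using sets_eq_imp_space_eq[OF se] by auto
  also have "\<dots> \<in> sets (lebesgue_n n \<Otimes>\<^sub>M lebesgue_n n)" by measurable
  finally show ?thesis unfolding se .
qed

lemma Aset_section:
  assumes b: "b \<in> space (sphere_uniform n (sqrt (real n * P)))" and k: "k \<ge> 0"
  shows "Pair b -` Aset n P \<sigma>2 c k = {z \<in> space (gauss_vec n \<sigma>2). k\<^sup>2 \<le> (\<Sum>i<n. ((\<lambda>i. c * b i) i + z i)\<^sup>2)}"
proof -
  have "k \<le> enorm n (\<lambda>i. c * b i + z i) \<longleftrightarrow> k\<^sup>2 \<le> (\<Sum>i<n. (c * b i + z i)\<^sup>2)" for z
  proof -
    have kk: "sqrt (k\<^sup>2) = k" using k by simp
    show ?thesis unfolding enorm_def by (metis kk real_sqrt_le_iff)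
  qed
  then show ?thesis using b by (auto simp: Aset_def space_pair_measure)
qed

definition phi :: "real \<Rightarrow> real \<Rightarrow> real \<Rightarrow> real" where
  "phi \<sigma>2 A t = t * A / (1 - 2*t*\<sigma>2) - ln (1 - 2*t*\<sigma>2) / 2"

definition dphi :: "real \<Rightarrow> real \<Rightarrow> real \<Rightarrow> real" where
  "dphi \<sigma>2 A t = A / (1 - 2*t*\<sigma>2)\<^sup>2 + \<sigma>2 / (1 - 2*t*\<sigma>2)"

lemma Mg_phi:
  assumes u: "1 - 2*t*\<sigma>2 > 0"
  shows "Mg n \<sigma>2 (real n * A) t = exp (real n * phi \<sigma>2 A t)"
proof -
  have s: "sqrt (1 - 2*t*\<sigma>2) = exp (ln (1 - 2*t*\<sigma>2) / 2)"
    using u by (subst ln_sqrt[symmetric]) auto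
  show ?thesis unfolding Mg_def phi_def s
    by (simp add: exp_of_nat_mult[symmetric] exp_diff[symmetric] right_diff_distrib)
qed

lemma DERIV_phi:
  assumes u: "1 - 2*t*\<sigma>2 > 0"
  shows "DERIV (phi \<sigma>2 A) t :> dphi \<sigma>2 A t"
proof -
  have "DERIV (\<lambda>t. t * A / (1 - 2*t*\<sigma>2) - ln (1 - 2*t*\<sigma>2) / 2) t :>
     ((1 * A) * (1 - 2*t*\<sigma>2) - (t*A) * (- (2*\<sigma>2))) / (1 - 2*t*\<sigma>2)\<^sup>2 - (- (2*\<sigma>2)) / (1 - 2*t*\<sigma>2) / 2"
  proof -
    have "4 - 8*(t*\<sigma>2) \<noteq> 0" "2 - 4*(t*\<sigma>2) \<noteq> 0" "2 * (\<sigma>2 * t) \<noteq> 1" using u by (auto simp: mult_ac)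
    then show ?thesis using u by (auto intro!: derivative_eq_intros simp: power2_eq_square field_simps)
  qed
  moreover have "((1 * A) * (1 - 2*t*\<sigma>2) - (t*A) * (- (2*\<sigma>2))) / (1 - 2*t*\<sigma>2)\<^sup>2 - (- (2*\<sigma>2)) / (1 - 2*t*\<sigma>2) / 2
      = dphi \<sigma>2 A t"
  proof -
    have w: "1 - 2*t*\<sigma>2 \<noteq> 0" using u by simp
    show ?thesis unfolding dphi_def using w by (simp add: divide_simps power2_eq_square) (simp add: algebra_simps)
  qed
  ultimately show ?thesis unfolding phi_def[abs_def] by simp
qed

lemma dphi_mono:
  assumes q: "\<sigma>2 > 0" and A: "A \<ge> 0" and st: "v < t" and u: "1 - 2*t*\<sigma>2 > 0"
  shows "dphi \<sigma>2 A v < dphi \<sigma>2 A t"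
proof -
  define x where "x = 1 - 2*t*\<sigma>2"
  define y where "y = 1 - 2 * v * \<sigma>2"
  have x: "0 < x" using u x_def by simp
  have xy: "x < y" using st q unfolding x_def y_def by simp
  have y: "0 < y" using x xy by simp
  have a: "\<sigma>2 / y < \<sigma>2 / x"
    using xy q x y by (intro divide_strict_left_mono mult_pos_pos) auto
  have "x\<^sup>2 \<le> y\<^sup>2" using xy x by (intro power_mono) auto
  then have b: "A / y\<^sup>2 \<le> A / x\<^sup>2"
    using x y A by (intro divide_left_mono mult_pos_pos) auto
  show ?thesis unfolding dphi_def using a b x_def y_def by simp
qed

lemma mvt_lower:
  assumes q: "\<sigma>2 > 0" and A: "A \<ge> 0" and st: "v < t" and u: "1 - 2*t*\<sigma>2 > 0"
  shows "phi \<sigma>2 A t - phi \<sigma>2 A v > (t - v) * dphi \<sigma>2 A v"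
proof -
  have "\<And>x. v \<le> x \<Longrightarrow> x \<le> t \<Longrightarrow> DERIV (phi \<sigma>2 A) x :> dphi \<sigma>2 A x"
    using u q by (intro DERIV_phi) (smt (verit, best) mult_left_mono mult_right_mono)
  from MVT2[OF st this] obtain z where z: "v < z" "z < t" "phi \<sigma>2 A t - phi \<sigma>2 A v = (t - v) * dphi \<sigma>2 A z"
    by blast
  have uz: "1 - 2*z*\<sigma>2 > 0" using z u q by (smt (verit, best) mult_left_mono mult_right_mono)
  have "dphi \<sigma>2 A v < dphi \<sigma>2 A z" using dphi_mono[OF q A z(1) uz] .
  then show ?thesis using z st by simp
qed

lemma mvt_upper:
  assumes q: "\<sigma>2 > 0" and A: "A \<ge> 0" and st: "v < t" and u: "1 - 2*t*\<sigma>2 > 0"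
  shows "phi \<sigma>2 A t - phi \<sigma>2 A v < (t - v) * dphi \<sigma>2 A t"
proof -
  have "\<And>x. v \<le> x \<Longrightarrow> x \<le> t \<Longrightarrow> DERIV (phi \<sigma>2 A) x :> dphi \<sigma>2 A x"
    using u q by (intro DERIV_phi) (smt (verit, best) mult_left_mono mult_right_mono)
  from MVT2[OF st this] obtain z where z: "v < z" "z < t" "phi \<sigma>2 A t - phi \<sigma>2 A v = (t - v) * dphi \<sigma>2 A z"
    by blast
  have "dphi \<sigma>2 A z < dphi \<sigma>2 A t" using dphi_mono[OF q A z(2) u] .
  then show ?thesis using z st by simp
qed

lemma params:
  fixes P \<sigma>2 R :: real
  assumes P: "P > 0" and q: "\<sigma>2 > 0" and R0: "0 < R" and RC: "R < ln (1 + P/\<sigma>2) / 2"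
  defines "snr \<equiv> P/\<sigma>2" and "\<beta> \<equiv> exp (2*R)" and "\<alpha> \<equiv> alpha_star (P/\<sigma>2) (theta R)"
  shows "0 < \<alpha>" "\<alpha> < 1" "sin (theta R) = exp (-R)" "1 < \<beta>" "exp (-R) ^ 2 = 1 / \<beta>"
    "snr * (\<beta> - 1) * (1 - \<alpha>) = \<beta> * \<alpha>\<^sup>2"
    "E_sp R snr = ((1 - \<beta>) * snr / (\<beta> * \<alpha>) + snr + ln (\<beta> * (1 - \<alpha>))) / 2"
    "0 < \<beta> * (1 - \<alpha>)" "\<beta> * (1 - \<alpha>) < 1"
proof -
  have snr: "snr > 0" using P q snr_def by simp
  have e1: "exp (-R) < 1" "0 < exp (-R)" using R0 by auto
  have e2: "-1 \<le> exp (-R)" "exp (-R) \<le> 1" using e1 by linarith+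
  show sin: "sin (theta R) = exp (-R)" unfolding theta_def using e2 by (rule sin_arcsin)
  show b1: "1 < \<beta>" using R0 \<beta>_def by simp
  have bsnr: "\<beta> < 1 + snr"
  proof -
    have "2*R < ln (1 + snr)" using RC snr_def by simp
    then have "exp (2*R) < exp (ln (1 + snr))" by simp
    then show ?thesis using snr \<beta>_def by simp
  qed
  show eb: "exp (-R) ^ 2 = 1 / \<beta>" unfolding \<beta>_def
    by (simp add: power2_eq_square exp_add[symmetric] exp_minus[symmetric] field_simps)
  have cs: "(cos (theta R))\<^sup>2 = (\<beta> - 1) / \<beta>"
  proof -
    have "cos (theta R) = sqrt (1 - (exp (-R))\<^sup>2)" unfolding theta_def using e2 by (rule cos_arcsin)
    then have "(cos (theta R))\<^sup>2 = 1 - (exp (-R))\<^sup>2" using e1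
      by (simp add: power_le_one)
    then show ?thesis using eb b1 by (simp add: field_simps)
  qed
  define D where "D = sqrt (1 + 4 / (snr * (cos (theta R))\<^sup>2))"
  have Darg: "4 / (snr * (cos (theta R))\<^sup>2) = 4 * \<beta> / (snr * (\<beta> - 1))"
    unfolding cs using b1 snr by (simp add: field_simps)
  have D1: "D > 1" unfolding D_def Darg using b1 snr by simp
  have D2: "D\<^sup>2 = 1 + 4 * \<beta> / (snr * (\<beta> - 1))" unfolding D_def Darg using b1 snr
    by (simp add: add_pos_nonneg)
  have al: "\<alpha> = 2 / (1 + D)" unfolding \<alpha>_def alpha_star_def D_def snr_def[symmetric]
    by (simp add: inverse_eq_divide)
  show a0: "0 < \<alpha>" using al D1 by simp
  show a1: "\<alpha> < 1" using al D1 by simp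
  have Da: "D = 2 / \<alpha> - 1" using al D1 a0 by (simp add: field_simps)
  show K: "snr * (\<beta> - 1) * (1 - \<alpha>) = \<beta> * \<alpha>\<^sup>2"
  proof -
    have "(2 / \<alpha> - 1)\<^sup>2 = 1 + 4 * \<beta> / (snr * (\<beta> - 1))" using D2 Da by simp
    then have "(2 - \<alpha>)\<^sup>2 * (snr * (\<beta> - 1)) = \<alpha>\<^sup>2 * (snr * (\<beta> - 1) + 4 * \<beta>)"
      using a0 b1 snr by (simp add: field_simps)
    then show ?thesis by (simp add: algebra_simps power2_eq_square)
  qed
  have rho: "1 + rho_G snr R = snr / (\<beta> * \<alpha>)"
  proof -
    have "sqrt (1 + 4 * beta_G R / (snr * (beta_G R - 1))) = D"
      unfolding D_def Darg beta_G_def \<beta>_def ..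
    then have "rho_G snr R = snr / (2 * \<beta>) * (1 + D) - 1" unfolding rho_G_def beta_G_def \<beta>_def by simp
    also have "1 + D = 2 / \<alpha>" using Da by simp
    finally show ?thesis using a0 b1 by (simp add: field_simps)
  qed
  show "E_sp R snr = ((1 - \<beta>) * snr / (\<beta> * \<alpha>) + snr + ln (\<beta> * (1 - \<alpha>))) / 2"
  proof -
    have lb: "ln \<beta> = 2 * R" unfolding \<beta>_def by simp
    have s1: "snr / (1 + rho_G snr R) = \<beta> * \<alpha>" using rho snr a0 b1 by simp
    have "E_sp R snr = ((1 - \<beta>) * (1 + rho_G snr R) + snr + ln (\<beta> - snr / (1 + rho_G snr R))) / 2"
      unfolding E_sp_def E_G_def beta_G_def \<beta>_def[symmetric] lb by (simp add: algebra_simps)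
    also have "\<dots> = ((1 - \<beta>) * snr / (\<beta> * \<alpha>) + snr + ln (\<beta> * (1 - \<alpha>))) / 2"
      unfolding s1 rho using snr by (simp add: algebra_simps)
    finally show ?thesis .
  qed
  show u0: "0 < \<beta> * (1 - \<alpha>)" using b1 a1 by simp
  show "\<beta> * (1 - \<alpha>) < 1"
  proof (rule ccontr)
    assume "\<not> \<beta> * (1 - \<alpha>) < 1"
    then have h: "1 \<le> \<beta> * (1 - \<alpha>)" by simp
    have h1: "\<beta> * \<alpha> \<le> \<beta> - 1" using h by (simp add: algebra_simps)
    have h2: "\<beta> * \<alpha>\<^sup>2 \<le> \<alpha> * (\<beta> - 1)" using h1 a0 by (simp add: power2_eq_square)
    have h3a: "(\<beta> * \<alpha>) * (\<beta> - 1) \<le> (\<beta> - 1) * (\<beta> - 1)"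
      using mult_right_mono[OF h1, of "\<beta> - 1"] b1 by simp
    have h2b: "(\<beta> * \<alpha>\<^sup>2) * \<beta> \<le> (\<alpha> * (\<beta> - 1)) * \<beta>"
      using mult_right_mono[OF h2, of \<beta>] b1 by simp
    have "(snr * (1 - \<alpha>) * \<beta>) * (\<beta> - 1) = (\<beta> * \<alpha>\<^sup>2) * \<beta>"
      using K by (simp add: mult_ac)
    also have "\<dots> \<le> (\<alpha> * (\<beta> - 1)) * \<beta>" by (rule h2b)
    also have "\<dots> = (\<beta> * \<alpha>) * (\<beta> - 1)" by (simp add: mult_ac)
    also have "\<dots> \<le> (\<beta> - 1) * (\<beta> - 1)" by (rule h3a)
    finally have "(snr * (1 - \<alpha>) * \<beta>) * (\<beta> - 1) \<le> (\<beta> - 1) * (\<beta> - 1)" .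
    then have h4: "snr * (1 - \<alpha>) * \<beta> \<le> \<beta> - 1" using b1 by (simp add: mult_le_cancel_right)
    have "snr * 1 \<le> snr * (\<beta> * (1 - \<alpha>))" using h snr by (intro mult_left_mono) auto
    then have "snr \<le> snr * (1 - \<alpha>) * \<beta>" by (simp add: mult_ac)
    then show False using h4 bsnr by simp
  qed
qed

lemma sum_cb: "(\<Sum>i<n. (c * b i)\<^sup>2) = (c::real)\<^sup>2 * (\<Sum>i<n. (b i)\<^sup>2)"
  by (simp add: power_mult_distrib sum_distrib_left)

lemma upper_n:
  assumes q: "\<sigma>2 > 0" and P: "P > 0" and n: "n \<ge> 1" and k: "k \<ge> 0" and kT: "k\<^sup>2 = real n * T"
    and u: "1 - 2*t*\<sigma>2 > 0" and t: "t \<ge> 0"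
  shows "measure (sphere_uniform n (sqrt (real n * P)) \<Otimes>\<^sub>M gauss_vec n \<sigma>2) (Aset n P \<sigma>2 c k)
         \<le> exp (- real n * (t*T - phi \<sigma>2 (c\<^sup>2*P) t))"
proof -
  let ?S = "sphere_uniform n (sqrt (real n * P))"
  let ?G = "gauss_vec n \<sigma>2"
  interpret G: prob_space ?G by (rule prob_space_gauss_vec[OF q])
  have aes: "AE b in ?S. (\<Sum>i<n. (b i)\<^sup>2) = (sqrt (real n * P))\<^sup>2" using P by (intro AE_sphere[OF n]) simp
  have "AE b in ?S. 0 \<le> measure ?G (Pair b -` Aset n P \<sigma>2 c k) \<and>
      measure ?G (Pair b -` Aset n P \<sigma>2 c k) \<le> exp (- real n * (t*T - phi \<sigma>2 (c\<^sup>2*P) t))"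
    using aes AE_space
  proof eventually_elim
    case (elim b)
    have sb: "(\<Sum>i<n. (b i)\<^sup>2) = real n * P" using elim P by simp
    have A: "(\<Sum>i<n. ((\<lambda>i. c * b i) i)\<^sup>2) = real n * (c\<^sup>2 * P)" by (simp add: sum_cb sb)
    have "emeasure ?G (Pair b -` Aset n P \<sigma>2 c k) \<le> ennreal (exp (-t*k\<^sup>2) * Mg n \<sigma>2 (\<Sum>i<n. ((\<lambda>i. c * b i) i)\<^sup>2) t)"
      unfolding Aset_section[OF elim(2) k] by (rule chernoff_upper[OF q u t])
    also have "exp (-t*k\<^sup>2) * Mg n \<sigma>2 (\<Sum>i<n. ((\<lambda>i. c * b i) i)\<^sup>2) t = exp (- real n * (t*T - phi \<sigma>2 (c\<^sup>2*P) t))"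
      unfolding A Mg_phi[OF u] kT by (simp add: exp_add[symmetric] algebra_simps)
    finally have "measure ?G (Pair b -` Aset n P \<sigma>2 c k) \<le> exp (- real n * (t*T - phi \<sigma>2 (c\<^sup>2*P) t))"
      by (simp add: G.emeasure_eq_measure ennreal_le_iff)
    then show ?case by simp
  qed
  then show ?thesis
    using pair_bound[OF prob_space_sphere[OF n] prob_space_gauss_vec[OF q] Aset_sets, of 0 "exp (- real n * (t*T - phi \<sigma>2 (c\<^sup>2*P) t))"]
    by simp
qed

lemma lower_n:
  assumes q: "\<sigma>2 > 0" and P: "P > 0" and n: "n \<ge> 1" and k: "k \<ge> 0" and kT: "k\<^sup>2 = real n * T"
    and t: "t \<ge> 0" and h: "h \<ge> 0" and u2: "1 - 2*(t+h)*\<sigma>2 > 0"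
    and half: "exp (real n * (h*T + phi \<sigma>2 (c\<^sup>2*P) (t-h) - phi \<sigma>2 (c\<^sup>2*P) t))
             + exp (real n * (phi \<sigma>2 (c\<^sup>2*P) (t+h) - phi \<sigma>2 (c\<^sup>2*P) t - h*T')) \<le> 1/2"
  shows "exp (- real n * (t*T' - phi \<sigma>2 (c\<^sup>2*P) t)) / 2
     \<le> measure (sphere_uniform n (sqrt (real n * P)) \<Otimes>\<^sub>M gauss_vec n \<sigma>2) (Aset n P \<sigma>2 c k)"
proof -
  let ?S = "sphere_uniform n (sqrt (real n * P))"
  let ?G = "gauss_vec n \<sigma>2"
  let ?phi = "phi \<sigma>2 (c\<^sup>2*P)"
  interpret G: prob_space ?G by (rule prob_space_gauss_vec[OF q])
  have aes: "AE b in ?S. (\<Sum>i<n. (b i)\<^sup>2) = (sqrt (real n * P))\<^sup>2" using P by (intro AE_sphere[OF n]) simp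
  have u: "1 - 2*t*\<sigma>2 > 0" using u2 q h by (smt (verit) mult_right_mono)
  have u1: "1 - 2*(t-h)*\<sigma>2 > 0" using u q h by (smt (verit) mult_right_mono)
  have "AE b in ?S. exp (- real n * (t*T' - ?phi t)) / 2 \<le> measure ?G (Pair b -` Aset n P \<sigma>2 c k) \<and>
      measure ?G (Pair b -` Aset n P \<sigma>2 c k) \<le> 1"
    using aes AE_space
  proof eventually_elim
    case (elim b)
    define p where "p = measure ?G (Pair b -` Aset n P \<sigma>2 c k)"
    have sb: "(\<Sum>i<n. (b i)\<^sup>2) = real n * P" using elim P by simp
    have A: "(\<Sum>i<n. ((\<lambda>i. c * b i) i)\<^sup>2) = real n * (c\<^sup>2 * P)" by (simp add: sum_cb sb)
    have ch: "Mg n \<sigma>2 (real n * (c\<^sup>2 * P)) t \<le> exp (h*k\<^sup>2) * Mg n \<sigma>2 (real n * (c\<^sup>2 * P)) (t-h)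
       + exp (t*(real n * T')) * p + exp (-h*(real n * T')) * Mg n \<sigma>2 (real n * (c\<^sup>2 * P)) (t+h)"
      using chernoff_lower[OF q t h h u2, where X="k\<^sup>2" and Y="real n * T'" and n=n and a="\<lambda>i. c * b i"]
      unfolding A p_def Aset_section[OF elim(2) k] by simp
    define E0 where "E0 = exp (real n * ?phi t)"
    define e1 where "e1 = exp (real n * (h*T + ?phi (t-h) - ?phi t))"
    define e2 where "e2 = exp (real n * (?phi (t+h) - ?phi t - h*T'))"
    have E0: "E0 > 0" unfolding E0_def by simp
    have m1: "exp (h*k\<^sup>2) * Mg n \<sigma>2 (real n * (c\<^sup>2 * P)) (t-h) = E0 * e1"
      unfolding Mg_phi[OF u1] E0_def e1_def kT exp_add[symmetric] by (simp add: algebra_simps)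
    have m2: "exp (-h*(real n * T')) * Mg n \<sigma>2 (real n * (c\<^sup>2 * P)) (t+h) = E0 * e2"
      unfolding Mg_phi[OF u2] E0_def e2_def exp_add[symmetric] by (simp add: algebra_simps)
    have "E0 \<le> E0 * e1 + exp (t*(real n * T')) * p + E0 * e2"
      using ch unfolding Mg_phi[OF u] m1 m2 E0_def .
    moreover have "e1 + e2 \<le> 1/2" using half unfolding e1_def e2_def .
    moreover have "E0 * (e1 + e2) \<le> E0 * (1/2)" using E0 \<open>e1 + e2 \<le> 1/2\<close> by (intro mult_left_mono) auto
    ultimately have "E0 / 2 \<le> exp (t*(real n * T')) * p"
      by (simp add: distrib_left)
    then have "E0 * exp (- (t*(real n * T'))) / 2 \<le> p"
      by (simp add: exp_minus field_simps)
    moreover have "E0 * exp (- (t*(real n * T'))) = exp (- real n * (t*T' - ?phi t))"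
      unfolding E0_def exp_add[symmetric] by (simp add: algebra_simps)
    ultimately show ?case unfolding p_def by simp
  qed
  then show ?thesis
    using pair_bound[OF prob_space_sphere[OF n] prob_space_gauss_vec[OF q] Aset_sets, of "exp (- real n * (t*T' - ?phi t)) / 2" 1]
    by simp
qed

lemma choose_params:
  fixes \<sigma>2 A ts \<epsilon> :: real
  assumes q: "\<sigma>2 > 0" and A: "A \<ge> 0" and ts: "ts \<ge> 0" and uts: "1 - 2*ts*\<sigma>2 > 0" and e: "\<epsilon> > 0"
  shows "\<exists>t h T'. 0 \<le> t \<and> 0 \<le> h \<and> 1 - 2*(t+h)*\<sigma>2 > 0
     \<and> h * dphi \<sigma>2 A ts + phi \<sigma>2 A (t-h) - phi \<sigma>2 A t < 0
     \<and> phi \<sigma>2 A (t+h) - phi \<sigma>2 A t - h*T' < 0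
     \<and> t*T' - phi \<sigma>2 A t < ts * dphi \<sigma>2 A ts - phi \<sigma>2 A ts + \<epsilon>"
proof -
  define F where "F = (\<lambda>h. (ts+h) * dphi \<sigma>2 A (ts+2*h) - phi \<sigma>2 A (ts+h))"
  have F0: "F 0 = ts * dphi \<sigma>2 A ts - phi \<sigma>2 A ts" unfolding F_def by simp
  have "isCont F 0" unfolding F_def phi_def dphi_def using uts
    by (auto intro!: continuous_intros)
  then have "(F \<longlongrightarrow> F 0) (at_right 0)"
    unfolding isCont_def by (rule filterlim_mono) (auto simp: at_le)
  then have ev2: "eventually (\<lambda>h. F h < F 0 + \<epsilon>) (at_right 0)"
    using e by (intro order_tendstoD(2)) auto
  define d where "d = (1 - 2*ts*\<sigma>2) / (6*\<sigma>2)"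
  have d: "d > 0" unfolding d_def using uts q by simp
  have ev1: "eventually (\<lambda>h. h \<in> {0<..<d}) (at_right 0)" by (rule eventually_at_right_real[OF d])
  obtain h where h: "h \<in> {0<..<d}" "F h < F 0 + \<epsilon>"
    using eventually_happens'[OF _ eventually_conj[OF ev1 ev2]] by auto
  have h0: "0 < h" "h < d" using h by auto
  have key: "6*(h*\<sigma>2) < 1 - 2*ts*\<sigma>2" using h0 q unfolding d_def by (simp add: field_simps)
  have hs: "0 < h*\<sigma>2" using h0 q by simp
  have x1: "1 - 2*(ts+h)*\<sigma>2 = 1 - 2*ts*\<sigma>2 - 2*(h*\<sigma>2)" by (simp add: algebra_simps)
  have x2: "1 - 2*(ts+2*h)*\<sigma>2 = 1 - 2*ts*\<sigma>2 - 4*(h*\<sigma>2)" by (simp add: algebra_simps)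
  have x3: "1 - 2*(ts+h+h)*\<sigma>2 = 1 - 2*ts*\<sigma>2 - 4*(h*\<sigma>2)" by (simp add: algebra_simps)
  have u1: "1 - 2*(ts+h)*\<sigma>2 > 0" unfolding x1 using key hs by linarith
  have u2: "1 - 2*(ts+2*h)*\<sigma>2 > 0" unfolding x2 using key hs by linarith
  have u2': "1 - 2*(ts+h+h)*\<sigma>2 > 0" unfolding x3 using key hs by linarith
  have g1: "phi \<sigma>2 A (ts+h) - phi \<sigma>2 A ts > ((ts+h) - ts) * dphi \<sigma>2 A ts"
    by (rule mvt_lower[OF q A _ u1]) (use h0 in simp)
  have g2: "phi \<sigma>2 A (ts+2*h) - phi \<sigma>2 A (ts+h) < ((ts+2*h) - (ts+h)) * dphi \<sigma>2 A (ts+2*h)"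
    by (rule mvt_upper[OF q A _ u2]) (use h0 in simp)
  have e2: "ts + h + h = ts + 2*h" by simp
  show ?thesis
    apply (rule exI[of _ "ts+h"], rule exI[of _ h], rule exI[of _ "dphi \<sigma>2 A (ts+2*h)"])
    using ts h0 u2' g1 g2 h(2) unfolding F0[symmetric] e2 by (auto simp: F_def)
qed

lemma exp_n_small:
  fixes g :: real assumes "g < 0"
  shows "eventually (\<lambda>n. exp (real n * g) < 1/4) sequentially"
proof -
  have "(\<lambda>n. exp g ^ n) \<longlonglongrightarrow> 0" using assms by (intro LIMSEQ_power_zero) auto
  then have "eventually (\<lambda>n. exp g ^ n < 1/4) sequentially" by (rule order_tendstoD(2)) simp
  then show ?thesis by (simp add: exp_of_nat_mult[symmetric])
qed

theorem lemma1:
  fixes P \<sigma>2 R :: real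
  assumes "P > 0" and "\<sigma>2 > 0" and "0 < R" and "R < ln (1 + P / \<sigma>2) / 2"
  shows "exp_equiv
     (\<lambda>n. exp (- real n * E_sp R (P / \<sigma>2)))
     (\<lambda>n. let a = alpha_star (P / \<sigma>2) (theta R) in
        measure (sphere_uniform n (sqrt (real n * P)) \<Otimes>\<^sub>M gauss_vec n \<sigma>2)
          {(b, z) \<in> space (sphere_uniform n (sqrt (real n * P)) \<Otimes>\<^sub>M gauss_vec n \<sigma>2).
             enorm n (\<lambda>i. (1 - a) / a * b i + z i) \<ge> sqrt (real n * P) / a * sin (theta R)})"
proof -
  note P = assms(1) and q = assms(2) and R0 = assms(3) and RC = assms(4)
  define snr where "snr = P / \<sigma>2"
  define \<beta> where "\<beta> = exp (2*R)"
  define \<alpha> where "\<alpha> = alpha_star (P/\<sigma>2) (theta R)"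
  note pr = params[OF P q R0 RC, folded snr_def \<beta>_def \<alpha>_def]
  have a0: "0 < \<alpha>" and a1: "\<alpha> < 1" and sin: "sin (theta R) = exp (-R)" and b1: "1 < \<beta>"
    and eb: "exp (-R) ^ 2 = 1 / \<beta>" and K: "snr * (\<beta> - 1) * (1 - \<alpha>) = \<beta> * \<alpha>\<^sup>2"
    and Esp: "E_sp R snr = ((1 - \<beta>) * snr / (\<beta> * \<alpha>) + snr + ln (\<beta> * (1 - \<alpha>))) / 2"
    and u0: "0 < \<beta> * (1 - \<alpha>)" and u1: "\<beta> * (1 - \<alpha>) < 1"
    using pr by auto
  define c where "c = (1 - \<alpha>) / \<alpha>"
  define A where "A = c\<^sup>2 * P"
  define T where "T = P / (\<beta> * \<alpha>\<^sup>2)"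
  define u where "u = \<beta> * (1 - \<alpha>)"
  define ts where "ts = (1 - u) / (2 * \<sigma>2)"
  define E where "E = E_sp R snr"
  define k where "k = (\<lambda>n::nat. sqrt (real n * P) / \<alpha> * sin (theta R))"
  define Pr where "Pr = (\<lambda>n. measure (sphere_uniform n (sqrt (real n * P)) \<Otimes>\<^sub>M gauss_vec n \<sigma>2) (Aset n P \<sigma>2 c (k n)))"
  have A0: "A \<ge> 0" unfolding A_def using P by simp
  have uts: "1 - 2*ts*\<sigma>2 = u" unfolding ts_def using q by (simp add: field_simps)
  have ts0: "ts > 0" unfolding ts_def using u1 q u_def by simp
  have upos: "0 < u" using u0 u_def by simp
  have k0: "k n \<ge> 0" for n unfolding k_def sin using a0 P by (intro mult_nonneg_nonneg divide_nonneg_pos) auto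
  have kT: "(k n)\<^sup>2 = real n * T" for n
  proof -
    have "(k n)\<^sup>2 = real n * P / \<alpha>\<^sup>2 * exp (-R) ^ 2" unfolding k_def sin using P
      by (simp add: power_mult_distrib power_divide)
    then show ?thesis unfolding eb T_def by simp
  qed
  have K': "P * (\<beta> - 1) * (1 - \<alpha>) = \<sigma>2 * (\<beta> * \<alpha>\<^sup>2)"
    using K q unfolding snr_def by (simp add: field_simps)
  have w0: "1 - \<alpha> \<noteq> 0" using a1 by simp
  have gA: "(w/\<alpha>)\<^sup>2 * P / (\<beta>*w)\<^sup>2 = P / (\<alpha>\<^sup>2 * \<beta>\<^sup>2)" if "w \<noteq> 0" for w
    using that a0 b1 by (simp add: field_simps power2_eq_square)
  have gB: "P / (\<beta> * \<alpha>\<^sup>2) - (w/\<alpha>)\<^sup>2 * P / (\<beta>*w) = P * (1 - w) / (\<beta> * \<alpha>\<^sup>2)" if "w \<noteq> 0" for w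
    using that a0 b1 by (simp add: field_simps power2_eq_square)
  have s2: "\<sigma>2 = P * (\<beta> - 1) * (1 - \<alpha>) / (\<beta> * \<alpha>\<^sup>2)" using K' a0 b1 by (simp add: field_simps)
  have gC: "P * (\<beta> - 1) * w / (\<beta> * \<alpha>\<^sup>2) / (\<beta>*w) = P * (\<beta> - 1) / (\<beta>\<^sup>2 * \<alpha>\<^sup>2)" if "w \<noteq> 0" for w
    using that a0 b1 by (simp add: field_simps power2_eq_square)
  have dT: "dphi \<sigma>2 A ts = T"
  proof -
    have hx: "A / u\<^sup>2 = P / (\<alpha>\<^sup>2 * \<beta>\<^sup>2)" unfolding A_def c_def u_def by (rule gA[OF w0])
    have hy: "\<sigma>2 / u = P * (\<beta> - 1) / (\<beta>\<^sup>2 * \<alpha>\<^sup>2)" unfolding u_def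
      by (subst s2) (rule gC[OF w0])
    have "A / u\<^sup>2 + \<sigma>2 / u = P / (\<alpha>\<^sup>2 * \<beta>\<^sup>2) + P * (\<beta> - 1) / (\<beta>\<^sup>2 * \<alpha>\<^sup>2)"
      by (simp only: hx hy)
    also have "\<dots> = T" unfolding T_def using a0 b1 by (simp add: field_simps power2_eq_square)
    finally have "A / u\<^sup>2 + \<sigma>2 / u = T" .
    then show ?thesis unfolding dphi_def uts .
  qed
  have EE: "ts * T - phi \<sigma>2 A ts = E"
  proof -
    have "ts * T - phi \<sigma>2 A ts = ts * (T - A / u) + ln u / 2" unfolding phi_def uts by (simp add: algebra_simps)
    also have "T - A / u = P * (1 - (1 - \<alpha>)) / (\<beta> * \<alpha>\<^sup>2)" unfolding T_def A_def c_def u_def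
      by (rule gB[OF w0])
    also have "\<dots> = P / (\<alpha> * \<beta>)" using a0 b1 by (simp add: field_simps power2_eq_square)
    also have "ts * (P / (\<alpha> * \<beta>)) = ((1 - \<beta>) * snr / (\<beta> * \<alpha>) + snr) / 2"
      unfolding ts_def u_def snr_def using a0 b1 q by (simp add: field_simps)
    finally show ?thesis unfolding E_def Esp u_def by (simp add: field_simps)
  qed
  have UB: "Pr n \<le> exp (- real n * E)" if n: "n \<ge> 1" for n
    using upper_n[OF q P n k0 kT, of ts c] uts upos ts0 unfolding Pr_def A_def[symmetric] EE by simp
  have LB: "eventually (\<lambda>n. exp (- real n * (E + \<epsilon>)) / 2 \<le> Pr n) sequentially" if e: "\<epsilon> > 0" for \<epsilon>
  proof -
    obtain t h T' where th: "0 \<le> t" "0 \<le> h" "1 - 2*(t+h)*\<sigma>2 > 0"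
      and g1: "h * dphi \<sigma>2 A ts + phi \<sigma>2 A (t-h) - phi \<sigma>2 A t < 0"
      and g2: "phi \<sigma>2 A (t+h) - phi \<sigma>2 A t - h*T' < 0"
      and F: "t*T' - phi \<sigma>2 A t < ts * dphi \<sigma>2 A ts - phi \<sigma>2 A ts + \<epsilon>"
      using choose_params[OF q A0 _ _ e, of ts] ts0 uts upos by auto
    have F': "t*T' - phi \<sigma>2 A t < E + \<epsilon>" using F unfolding dT EE .
    have ev: "eventually (\<lambda>n. n \<ge> 1 \<and> exp (real n * (h * T + phi \<sigma>2 A (t-h) - phi \<sigma>2 A t)) < 1/4
        \<and> exp (real n * (phi \<sigma>2 A (t+h) - phi \<sigma>2 A t - h*T')) < 1/4) sequentially"
      using exp_n_small[OF g1[unfolded dT]] exp_n_small[OF g2] eventually_ge_at_top[of 1]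
      by eventually_elim auto
    show ?thesis using ev
    proof eventually_elim
      case (elim n)
      have "exp (- real n * (t*T' - phi \<sigma>2 A t)) / 2 \<le> Pr n"
        unfolding Pr_def using lower_n[OF q P _ k0 kT th(1,2), of n c T'] elim th(3)
        unfolding A_def[symmetric] by simp
      moreover have "exp (- real n * (E + \<epsilon>)) \<le> exp (- real n * (t*T' - phi \<sigma>2 A t))"
        using F' by (simp add: mult_left_mono)
      ultimately show ?case by linarith
    qed
  qed
  have eqg: "(\<lambda>n. let a = alpha_star (P / \<sigma>2) (theta R) in
        measure (sphere_uniform n (sqrt (real n * P)) \<Otimes>\<^sub>M gauss_vec n \<sigma>2)
          {(b, z) \<in> space (sphere_uniform n (sqrt (real n * P)) \<Otimes>\<^sub>M gauss_vec n \<sigma>2).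
             enorm n (\<lambda>i. (1 - a) / a * b i + z i) \<ge> sqrt (real n * P) / a * sin (theta R)}) = Pr"
    unfolding Pr_def Aset_def k_def c_def \<alpha>_def Let_def ..
  have E': "E_sp R (P / \<sigma>2) = E" unfolding E_def snr_def ..
  show ?thesis unfolding eqg E' exp_equiv_def
  proof
    show "\<forall>\<^sub>F n in sequentially. 0 < exp (- real n * E) \<and> 0 < Pr n"
      using LB[OF zero_less_one]
    proof eventually_elim
      case (elim n)
      have "0 < exp (- real n * (E + 1)) / 2" by simp
      then have "0 < Pr n" using elim by linarith
      then show ?case by simp
    qed
  next
    show "(\<lambda>n. ln (exp (- real n * E) / Pr n) / real n) \<longlonglongrightarrow> 0"
    proof (rule tendstoI)
      fix e :: real assume e: "e > 0"
      have ev3: "eventually (\<lambda>n. ln 2 / real n < e / 2) sequentially"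
      proof -
        have "(\<lambda>n. ln 2 / real n) \<longlonglongrightarrow> 0" by (intro tendsto_divide_0[OF tendsto_const] filterlim_at_top_imp_at_infinity[OF filterlim_real_sequentially])
        then show ?thesis using e by (intro order_tendstoD(2)) auto
      qed
      show "eventually (\<lambda>n. dist (ln (exp (- real n * E) / Pr n) / real n) 0 < e) sequentially"
        using LB[OF half_gt_zero[OF e]] ev3 eventually_ge_at_top[of 1]
      proof eventually_elim
        case (elim n)
        have n: "n \<ge> 1" and lb: "exp (- real n * (E + e / 2)) / 2 \<le> Pr n" and l2: "ln 2 / real n < e / 2"
          using elim by auto
        have "0 < exp (- real n * (E + e / 2)) / 2" by simp
        then have ppos: "0 < Pr n" using lb by linarith
        have ub: "Pr n \<le> exp (- real n * E)" using UB[OF n] .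
        have r0: "0 \<le> ln (exp (- real n * E) / Pr n)" using ub ppos by simp
        have "ln (exp (- real n * (E + e / 2)) / 2) \<le> ln (Pr n)" using lb ppos by simp
        then have "- real n * (E + e / 2) - ln 2 \<le> ln (Pr n)" by (simp add: ln_div)
        then have r1: "ln (exp (- real n * E) / Pr n) \<le> ln 2 + real n * (e/2)"
          using ppos by (simp add: ln_div algebra_simps)
        have npos: "real n > 0" using n by simp
        have "ln (exp (- real n * E) / Pr n) / real n \<le> ln 2 / real n + e/2"
          using r1 npos by (simp add: field_simps)
        moreover have "0 \<le> ln (exp (- real n * E) / Pr n) / real n" using r0 npos by simp
        ultimately have "\<bar>ln (exp (- real n * E) / Pr n) / real n\<bar> < e" using l2 by linarith
        then show ?case by (simp add: dist_real_def)
      qed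
    qed
  qed
qed

end
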